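(* Let $h$ be the concatenation of two uniformly distributed $\ell$-bit streams, let $x$ be a uniformly distributed $\ell$-bit stream, and let $z$ be any $\ell$-bit stream. Then $$G(z\boxplus h\vdash x\boxplus h)_\ell=G(z,z\boxplus h\vdash x\boxplus h)_\ell=\left(\tfrac34\right)^\ell.$$
   Context: For $x\in\mathbb{Z}_2^\ell$ and $h=h^{(0)}::h^{(1)}$ with $h^{(0)},h^{(1)}\in\mathbb{Z}_2^\ell$, $(x\boxplus h)_i=h^{(x_i)}_i$. The random values $x,h^{(0)},h^{(1)}$ are independent of each other and of $z$. $G(\Xi\vdash\Theta)$ is the guessing chance: the maximal probability, over randomized guessing procedures, of outputting $\Theta$ on input $\Xi$, the probability over the random values, as a sequence in $\ell$ considered up to negligible difference. *)

theory Defs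
  imports "HOL-Probability.Probability"
begin

text \<open>Bit streams of length l are boolean lists of length l (True = 1).\<close>

definition bitstreams :: "nat \<Rightarrow> bool list pmf" where
  "bitstreams l = pmf_of_set {xs. length xs = l}"

text \<open>x boxplus h, where h = h0 @ h1 with h0, h1 of length (length x):
  the i-th bit is h1 ! i if x ! i, else h0 ! i.\<close>

definition boxplus :: "bool list \<Rightarrow> bool list \<Rightarrow> bool list" where
  "boxplus x h = map (\<lambda>i. if x ! i then h ! (length x + i) else h ! i) [0..<length x]"

definition random_values :: "bool list pmf \<Rightarrow> nat \<Rightarrow> (bool list \<times> bool list \<times> bool list) pmf" where
  "random_values Z l = do {
     z \<leftarrow> Z;
     x \<leftarrow> bitstreams l;
     h0 \<leftarrow> bitstreams l;
     h1 \<leftarrow> bitstreams l;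
     return_pmf (z, x, h0 @ h1) }"

text \<open>Guessing chance G(inp |- out): supremum over randomized guessing procedures f
  (maps from input to a distribution on outputs) of the success probability.\<close>

definition guess_chance :: "'r pmf \<Rightarrow> ('r \<Rightarrow> 'a) \<Rightarrow> ('r \<Rightarrow> 'b) \<Rightarrow> real" where
  "guess_chance R inp out =
     (SUP f :: 'a \<Rightarrow> 'b pmf.
        measure_pmf.prob (bind_pmf R (\<lambda>r. map_pmf (\<lambda>g. g = out r) (f (inp r)))) {True})"

end

theory Submission imports Defs begin

definition Ls :: "nat \<Rightarrow> bool list set" where "Ls n = {xs. length xs = n}"

fun bp3 :: "bool list \<Rightarrow> bool list \<Rightarrow> bool list \<Rightarrow> bool list" where
  "bp3 (x#xs) (a#h0) (b#h1) = (if x then b else a) # bp3 xs h0 h1"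
| "bp3 _ _ _ = []"

lemma finite_Ls[simp]: "finite (Ls n)"
proof -
  have "Ls n = {xs. set xs \<subseteq> UNIV \<and> length xs = n}" by (auto simp: Ls_def)
  then show ?thesis using finite_lists_length_eq[of "UNIV::bool set" n] by simp
qed

lemma card_Ls[simp]: "card (Ls n) = 2 ^ n"
proof -
  have "Ls n = {xs. set xs \<subseteq> UNIV \<and> length xs = n}" by (auto simp: Ls_def)
  then show ?thesis using card_lists_length_eq[of "UNIV::bool set" n] by simp
qed

lemma Ls_ne[simp]: "Ls n \<noteq> {}"
  using card_Ls[of n] by (metis card.empty power_not_zero zero_neq_numeral)

lemma Ls_Suc: "Ls (Suc n) = Cons True ` Ls n \<union> Cons False ` Ls n"
  unfolding Ls_def by (auto simp: length_Suc_conv image_iff)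

lemma sum_Ls_Suc: "(\<Sum>xs\<in>Ls (Suc n). g xs) = (\<Sum>xs\<in>Ls n. g (True#xs) + g (False#xs))"
  unfolding Ls_Suc
  by (subst sum.union_disjoint) (auto simp: sum.reindex sum.distrib)

lemma Ls_0: "Ls 0 = {[]}" by (auto simp: Ls_def)

definition N :: "nat \<Rightarrow> bool list \<Rightarrow> bool list \<Rightarrow> bool list \<Rightarrow> real" where
  "N n z a b = (\<Sum>x\<in>Ls n. \<Sum>h0\<in>Ls n. \<Sum>h1\<in>Ls n.
       if bp3 z h0 h1 = a \<and> bp3 x h0 h1 = b then 1 else 0)"

lemma N_Cons: "N (Suc n) (zi#z) (ai#a) (bi#b) =
   (if ai = bi then 3 else 1) * N n z a b"
  unfolding N_def sum_Ls_Suc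
  by (cases zi; cases ai; cases bi) (simp_all add: sum.distrib flip: sum_distrib_left)

lemma N_bound: "length z = n \<Longrightarrow> length a = n \<Longrightarrow> length b = n \<Longrightarrow>
   N n z a b \<le> 3 ^ n \<and> N n z a a = 3 ^ n"
proof (induction n arbitrary: z a b)
  case 0
  then show ?case by (simp add: N_def Ls_0)
next
  case (Suc n)
  then obtain zi z' ai a' bi b' where "z = zi#z'" "a = ai#a'" "b = bi#b'"
    by (metis length_Suc_conv)
  moreover have le3: "\<And>(x::real) m. x \<le> 3^m \<Longrightarrow> x \<le> 3*3^m"
  proof -
    fix x :: real and m :: nat assume "x \<le> 3^m" moreover have "(0::real) \<le> 3^m" by simp
    ultimately show "x \<le> 3*3^m" by linarith
  qed
  ultimately show ?case using Suc.prems Suc.IH[of z' a' b']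
    by (auto simp: N_Cons intro: le3)
qed

lemma length_bp3: "length (bp3 x h0 h1) = min (length x) (min (length h0) (length h1))"
  by (induction x h0 h1 rule: bp3.induct) auto

lemma swap3: "(\<Sum>a\<in>A. \<Sum>b\<in>B. \<Sum>x\<in>X. H a b x) = (\<Sum>x\<in>X. \<Sum>a\<in>A. \<Sum>b\<in>B. H a b x)"
proof -
  have "(\<Sum>a\<in>A. \<Sum>b\<in>B. \<Sum>x\<in>X. H a b x) = (\<Sum>a\<in>A. \<Sum>x\<in>X. \<Sum>b\<in>B. H a b x)"
    by (rule sum.cong[OF refl], rule sum.swap)
  also have "\<dots> = (\<Sum>x\<in>X. \<Sum>a\<in>A. \<Sum>b\<in>B. H a b x)" by (rule sum.swap)
  finally show ?thesis .
qed

lemma delta2: "A \<in> S \<Longrightarrow> B \<in> S \<Longrightarrow> finite S \<Longrightarrow>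
  (\<Sum>a\<in>S. \<Sum>b\<in>S. q a b * (if A = a \<and> B = b then 1 else 0)) = (q A B :: real)"
proof -
  assume h: "A \<in> S" "B \<in> S" "finite S"
  have "\<And>a. (\<Sum>b\<in>S. q a b * (if A = a \<and> B = b then 1 else 0)) = (if A = a then q a B else 0)"
  proof -
    fix a
    have "(\<Sum>b\<in>S. q a b * (if A = a \<and> B = b then 1 else 0)) = (\<Sum>b\<in>S. if A = a then (if B = b then q a b else 0) else 0)"
      by (intro sum.cong) auto
    also have "\<dots> = (if A = a then q a B else 0)" using h by (simp add: sum.delta)
    finally show "(\<Sum>b\<in>S. q a b * (if A = a \<and> B = b then 1 else 0)) = (if A = a then q a B else 0)" .
  qed
  then show ?thesis using h by (simp add: sum.delta)
qed

lemma decomp: "length z = n \<Longrightarrow>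
  (\<Sum>x\<in>Ls n. \<Sum>h0\<in>Ls n. \<Sum>h1\<in>Ls n. q (bp3 z h0 h1) (bp3 x h0 h1)) =
  (\<Sum>a\<in>Ls n. \<Sum>b\<in>Ls n. q a b * N n z a b)"
proof -
  assume z: "length z = n"
  define F where "F a b x h0 h1 = q a b * (if bp3 z h0 h1 = a \<and> bp3 x h0 h1 = b then 1 else 0)" for a b x h0 h1
  have "(\<Sum>x\<in>Ls n. \<Sum>h0\<in>Ls n. \<Sum>h1\<in>Ls n. q (bp3 z h0 h1) (bp3 x h0 h1)) =
     (\<Sum>x\<in>Ls n. \<Sum>h0\<in>Ls n. \<Sum>h1\<in>Ls n. \<Sum>a\<in>Ls n. \<Sum>b\<in>Ls n.
         q a b * (if bp3 z h0 h1 = a \<and> bp3 x h0 h1 = b then 1 else 0))"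
    by (intro sum.cong refl delta2[symmetric]) (auto simp: Ls_def length_bp3 z finite_Ls[unfolded Ls_def])
  also have "\<dots> = (\<Sum>a\<in>Ls n. \<Sum>b\<in>Ls n. \<Sum>x\<in>Ls n. \<Sum>h0\<in>Ls n. \<Sum>h1\<in>Ls n. F a b x h0 h1)"
  proof -
    have "(\<Sum>a\<in>Ls n. \<Sum>b\<in>Ls n. \<Sum>x\<in>Ls n. \<Sum>h0\<in>Ls n. \<Sum>h1\<in>Ls n. F a b x h0 h1)
       = (\<Sum>x\<in>Ls n. \<Sum>a\<in>Ls n. \<Sum>b\<in>Ls n. \<Sum>h0\<in>Ls n. \<Sum>h1\<in>Ls n. F a b x h0 h1)"
      by (rule swap3)
    also have "\<dots> = (\<Sum>x\<in>Ls n. \<Sum>h0\<in>Ls n. \<Sum>a\<in>Ls n. \<Sum>b\<in>Ls n. \<Sum>h1\<in>Ls n. F a b x h0 h1)"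
      by (rule sum.cong[OF refl], rule swap3)
    also have "\<dots> = (\<Sum>x\<in>Ls n. \<Sum>h0\<in>Ls n. \<Sum>h1\<in>Ls n. \<Sum>a\<in>Ls n. \<Sum>b\<in>Ls n. F a b x h0 h1)"
      by (rule sum.cong[OF refl], rule sum.cong[OF refl], rule swap3)
    finally show ?thesis by (simp add: F_def)
  qed
  also have "\<dots> = (\<Sum>a\<in>Ls n. \<Sum>b\<in>Ls n. q a b * N n z a b)"
    by (simp add: N_def sum_distrib_left F_def)
  finally show ?thesis .
qed

lemma core_le:
  fixes q :: "bool list \<Rightarrow> bool list \<Rightarrow> real"
  assumes "length z = n" "\<And>a b. 0 \<le> q a b" "\<And>a. (\<Sum>b\<in>Ls n. q a b) \<le> 1"
  shows "(\<Sum>x\<in>Ls n. \<Sum>h0\<in>Ls n. \<Sum>h1\<in>Ls n. q (bp3 z h0 h1) (bp3 x h0 h1)) \<le> 6 ^ n"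
proof -
  have "(\<Sum>x\<in>Ls n. \<Sum>h0\<in>Ls n. \<Sum>h1\<in>Ls n. q (bp3 z h0 h1) (bp3 x h0 h1)) =
    (\<Sum>a\<in>Ls n. \<Sum>b\<in>Ls n. q a b * N n z a b)" by (rule decomp[OF assms(1)])
  also have "\<dots> \<le> (\<Sum>a\<in>Ls n. \<Sum>b\<in>Ls n. q a b * 3 ^ n)"
    using N_bound[OF assms(1)] assms(2)
    by (intro sum_mono mult_left_mono) (auto simp: Ls_def)
  also have "\<dots> = (\<Sum>a\<in>Ls n. (\<Sum>b\<in>Ls n. q a b) * 3 ^ n)"
    by (simp add: sum_distrib_right)
  also have "\<dots> \<le> (\<Sum>a\<in>Ls n. 1 * 3 ^ n)"
    using assms(3) by (intro sum_mono mult_right_mono) auto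
  also have "\<dots> = 6 ^ n" by (simp add: power_mult_distrib[symmetric])
  finally show ?thesis .
qed

lemma ite_mult: "(if P then 1 else 0) * (x::real) = (if P then x else 0)" by simp

lemma core_eq:
  assumes "length z = n"
  shows "(\<Sum>x\<in>Ls n. \<Sum>h0\<in>Ls n. \<Sum>h1\<in>Ls n. (if bp3 z h0 h1 = bp3 x h0 h1 then 1 else 0 :: real)) = 6 ^ n"
proof -
  have "(\<Sum>x\<in>Ls n. \<Sum>h0\<in>Ls n. \<Sum>h1\<in>Ls n. (if bp3 z h0 h1 = bp3 x h0 h1 then 1 else 0 :: real)) =
    (\<Sum>a\<in>Ls n. \<Sum>b\<in>Ls n. (if a = b then 1 else 0) * N n z a b)"
    by (rule decomp[OF assms(1), where q = "\<lambda>a b. if a = b then 1 else 0"])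
  also have "\<dots> = (\<Sum>a\<in>Ls n. N n z a a)"
    by (intro sum.cong refl) (simp add: ite_mult sum.delta)
  also have "\<dots> = (\<Sum>a\<in>Ls n. 3 ^ n)"
    using N_bound[OF assms(1)] by (intro sum.cong refl) (auto simp: Ls_def)
  also have "\<dots> = 6 ^ n" by (simp add: power_mult_distrib[symmetric])
  finally show ?thesis .
qed

lemma nth_bp3: "length h0 = length x \<Longrightarrow> length h1 = length x \<Longrightarrow> i < length x \<Longrightarrow>
   bp3 x h0 h1 ! i = (if x ! i then h1 ! i else h0 ! i)"
  by (induction x h0 h1 arbitrary: i rule: bp3.induct) (auto simp: nth_Cons split: nat.splits)

lemma boxplus_bp3: "length h0 = length x \<Longrightarrow> length h1 = length x \<Longrightarrow> boxplus x (h0 @ h1) = bp3 x h0 h1"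
  by (rule nth_equalityI) (auto simp: boxplus_def length_bp3 nth_bp3 nth_append)

lemma prob_formula:
  "measure_pmf.prob (bind_pmf (random_values Z l) (\<lambda>r. map_pmf (\<lambda>g. g = out r) (f (inp r)))) {True}
   = (\<integral>z. (\<Sum>x\<in>Ls l. \<Sum>h0\<in>Ls l. \<Sum>h1\<in>Ls l.
          pmf (f (inp (z, x, h0 @ h1))) (out (z, x, h0 @ h1))) / 2 ^ l / 2 ^ l / 2 ^ l \<partial>Z)"
proof -
  have b: "bitstreams l = pmf_of_set (Ls l)" by (simp add: bitstreams_def Ls_def)
  have m: "\<And>c p. pmf (map_pmf (\<lambda>g. g = c) p) True = pmf p c"
    by (simp add: pmf_map vimage_def measure_pmf_single)
  show ?thesis
    unfolding random_values_def b measure_pmf_single bind_assoc_pmf bind_return_pmf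
    by (simp add: pmf_bind m integral_pmf_of_set sum_divide_distrib)
qed

lemma arith34: "(6::real) ^ l / 2 ^ l / 2 ^ l / 2 ^ l = (3/4) ^ l"
proof -
  have "(6::real) ^ l = 3 ^ l * 2 ^ l" by (simp flip: power_mult_distrib)
  moreover have "(4::real) ^ l = 2 ^ l * 2 ^ l" by (simp flip: power_mult_distrib)
  ultimately show ?thesis by (simp add: power_divide)
qed

lemma sum_pmf_le1: "finite S \<Longrightarrow> (\<Sum>b\<in>S. pmf p b) \<le> 1"
  using measure_measure_pmf_finite[of S p] measure_pmf.prob_le_1[of p S] by simp

lemma main_gen:
  fixes g :: "bool list \<Rightarrow> bool list \<Rightarrow> 'a" and fz :: "'a \<Rightarrow> bool list pmf"
    and inp :: "bool list \<times> bool list \<times> bool list \<Rightarrow> 'a"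
  assumes Z: "set_pmf Z \<subseteq> Ls l"
  and inp: "\<And>z x h0 h1. z \<in> Ls l \<Longrightarrow> x \<in> Ls l \<Longrightarrow> h0 \<in> Ls l \<Longrightarrow> h1 \<in> Ls l \<Longrightarrow>
              inp (z, x, h0 @ h1) = g z (bp3 z h0 h1)"
  and out: "\<And>z x h0 h1. z \<in> Ls l \<Longrightarrow> x \<in> Ls l \<Longrightarrow> h0 \<in> Ls l \<Longrightarrow> h1 \<in> Ls l \<Longrightarrow>
              out (z, x, h0 @ h1) = bp3 x h0 h1"
  and fz: "\<And>z a. fz (g z a) = return_pmf a"
  shows "guess_chance (random_values Z l) inp out = (3/4) ^ l"
proof -
  define P where "P f = measure_pmf.prob (bind_pmf (random_values Z l) (\<lambda>r. map_pmf (\<lambda>g. g = out r) (f (inp r)))) {True}"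
    for f :: "'a \<Rightarrow> bool list pmf"
  define T where "T f z = (\<Sum>x\<in>Ls l. \<Sum>h0\<in>Ls l. \<Sum>h1\<in>Ls l.
          pmf (f (inp (z, x, h0 @ h1))) (out (z, x, h0 @ h1))) / 2 ^ l / 2 ^ l / 2 ^ l"
    for f :: "'a \<Rightarrow> bool list pmf" and z
  have PT: "P f = (\<Sum>z\<in>Ls l. pmf Z z * T f z)" for f
  proof -
    have "P f = (\<integral>z. T f z \<partial>Z)" unfolding P_def T_def by (rule prob_formula)
    also have "\<dots> = (\<Sum>z\<in>Ls l. pmf Z z *\<^sub>R T f z)"
      by (rule integral_measure_pmf) (use Z in auto)
    finally show ?thesis by simp
  qed
  have Tz: "T f z = (\<Sum>x\<in>Ls l. \<Sum>h0\<in>Ls l. \<Sum>h1\<in>Ls l.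
          pmf (f (g z (bp3 z h0 h1))) (bp3 x h0 h1)) / 2 ^ l / 2 ^ l / 2 ^ l" if "z \<in> Ls l" for f z
    unfolding T_def using that by (intro arg_cong2[where f="(/)"] refl sum.cong) (auto simp: inp out)
  have Tle: "T f z \<le> (3/4) ^ l" if "z \<in> Ls l" for f z
  proof -
    have "(\<Sum>x\<in>Ls l. \<Sum>h0\<in>Ls l. \<Sum>h1\<in>Ls l. pmf (f (g z (bp3 z h0 h1))) (bp3 x h0 h1)) \<le> 6 ^ l"
      using that by (intro core_le) (auto simp: Ls_def intro: sum_pmf_le1 finite_Ls[unfolded Ls_def])
    then have "T f z \<le> 6 ^ l / 2 ^ l / 2 ^ l / 2 ^ l"
      unfolding Tz[OF that] by (intro divide_right_mono) auto
    then show ?thesis by (simp only: arith34)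
  qed
  have Teq: "T fz z = (3/4) ^ l" if "z \<in> Ls l" for z
  proof -
    have "(\<Sum>x\<in>Ls l. \<Sum>h0\<in>Ls l. \<Sum>h1\<in>Ls l. pmf (fz (g z (bp3 z h0 h1))) (bp3 x h0 h1)) =
          (\<Sum>x\<in>Ls l. \<Sum>h0\<in>Ls l. \<Sum>h1\<in>Ls l. (if bp3 z h0 h1 = bp3 x h0 h1 then 1 else 0 :: real))"
      by (intro sum.cong refl) (simp add: fz pmf_return)
    also have "\<dots> = 6 ^ l" using that by (intro core_eq) (auto simp: Ls_def)
    finally show ?thesis unfolding Tz[OF that] by (simp only: arith34)
  qed
  have sum1: "(\<Sum>z\<in>Ls l. pmf Z z) = 1" by (rule sum_pmf_eq_1) (use Z in auto)
  have bound: "P f \<le> (3/4) ^ l" for f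
  proof -
    have "P f \<le> (\<Sum>z\<in>Ls l. pmf Z z * (3/4) ^ l)"
      unfolding PT by (intro sum_mono mult_left_mono Tle) auto
    also have "\<dots> = (3/4) ^ l" using sum1 by (simp flip: sum_distrib_right)
    finally show ?thesis .
  qed
  have attained: "P fz = (3/4) ^ l"
  proof -
    have "P fz = (\<Sum>z\<in>Ls l. pmf Z z * (3/4) ^ l)"
      unfolding PT by (intro sum.cong refl) (simp add: Teq)
    also have "\<dots> = (3/4) ^ l" using sum1 by (simp flip: sum_distrib_right)
    finally show ?thesis .
  qed
  have gc: "guess_chance (random_values Z l) inp out = (SUP f. P f)"
    unfolding guess_chance_def P_def by simp
  show ?thesis unfolding gc
  proof (rule antisym)
    show "(SUP f. P f) \<le> (3/4) ^ l" by (rule cSUP_least) (auto simp: bound)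
    have "bdd_above (range P)" by (rule bdd_aboveI[of _ "(3/4)^l"]) (auto simp: bound)
    then have "P fz \<le> (SUP f. P f)" using cSUP_upper[of fz UNIV P] by simp
    then show "(3/4) ^ l \<le> (SUP f. P f)" by (simp add: attained)
  qed
qed

theorem proposition5p7:
  fixes l :: nat and Z :: "bool list pmf"
  assumes "set_pmf Z \<subseteq> {zs. length zs = l}"
  shows "guess_chance (random_values Z l) (\<lambda>(z, x, h). boxplus z h) (\<lambda>(z, x, h). boxplus x h)
           = (3/4) ^ l
         \<and> guess_chance (random_values Z l) (\<lambda>(z, x, h). (z, boxplus z h)) (\<lambda>(z, x, h). boxplus x h)
           = (3/4) ^ l"
proof
  have Z: "set_pmf Z \<subseteq> Ls l" using assms by (simp add: Ls_def)
  show "guess_chance (random_values Z l) (\<lambda>(z, x, h). boxplus z h) (\<lambda>(z, x, h). boxplus x h)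
           = (3/4) ^ l"
    by (rule main_gen[OF Z, where g = "\<lambda>z a. a" and fz = return_pmf])
       (auto simp: Ls_def boxplus_bp3)
  show "guess_chance (random_values Z l) (\<lambda>(z, x, h). (z, boxplus z h)) (\<lambda>(z, x, h). boxplus x h)
           = (3/4) ^ l"
    by (rule main_gen[OF Z, where g = "\<lambda>z a. (z, a)" and fz = "\<lambda>(z, a). return_pmf a"])
       (auto simp: Ls_def boxplus_bp3)
qed

end
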